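(* Let $p\ge1$, $\phi_1,\dots,\phi_p:\mathbb Z\to\mathbb C$, $s\in\mathbb Z$, and let $y:\{s-p+1,s-p+2,\dots\}\to\mathbb C$ satisfy $y_t=\sum_{l=1}^p\phi_l(t)y_{t-l}$ for all $t\ge s+1$. Then for all $t\ge s-p+1$, $$y_t=\sum_{m=1}^{p}\xi^{(m)}_{t,s}\,y_{s-m+1}.$$
   Context: Convention: $\phi_l(t)=0$ for $l>p$. For integers $t>s$ and $1\le m\le p$, $\Phi^{(m)}_{t,s}$ is the $(t-s)\times(t-s)$ lower Hessenberg matrix whose $(i,j)$ entry is: $\phi_{m+i-1}(s+i)$ if $j=1$; $-1$ if $j=i+1$; $\phi_{i-j+1}(s+i)$ if $2\le j\le i$; $0$ if $j>i+1$. For $t\ge s-p+1$: $\xi^{(m)}_{t,s}=\det\Phi^{(m)}_{t,s}$ if $t>s$; $\xi^{(m)}_{t,s}=1$ if $t=s-m+1$; $\xi^{(m)}_{t,s}=0$ if $s-p+1\le t\le s$, $t\ne s-m+1$. *)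

theory Defs
  imports "Jordan_Normal_Form.Determinant"
begin

definition phiext :: "nat \<Rightarrow> (nat \<Rightarrow> int \<Rightarrow> complex) \<Rightarrow> nat \<Rightarrow> int \<Rightarrow> complex" where
  "phiext p \<phi> l t = (if 1 \<le> l \<and> l \<le> p then \<phi> l t else 0)"

text \<open>The (t-s) x (t-s) lower Hessenberg matrix Phi^(m)_{t,s}; entries written
  with 0-based indices i0 = i-1, j0 = j-1 of the 1-based (i,j) in the paper.\<close>
definition PhiMat :: "nat \<Rightarrow> (nat \<Rightarrow> int \<Rightarrow> complex) \<Rightarrow> nat \<Rightarrow> int \<Rightarrow> int \<Rightarrow> complex mat" where
  "PhiMat p \<phi> m t s = mat (nat (t - s)) (nat (t - s)) (\<lambda>(i0, j0).
     if j0 = 0 then phiext p \<phi> (m + i0) (s + int i0 + 1)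
     else if j0 = i0 + 1 then -1
     else if j0 \<le> i0 then phiext p \<phi> (i0 - j0 + 1) (s + int i0 + 1)
     else 0)"

definition xi :: "nat \<Rightarrow> (nat \<Rightarrow> int \<Rightarrow> complex) \<Rightarrow> nat \<Rightarrow> int \<Rightarrow> int \<Rightarrow> complex" where
  "xi p \<phi> m t s = (if t > s then det (PhiMat p \<phi> m t s)
                    else if t = s - int m + 1 then 1 else 0)"

end

theory Submission
  imports Defs
begin

lemma sumS:
  fixes \<phi> :: "nat \<Rightarrow> int \<Rightarrow> complex" and y :: "int \<Rightarrow> complex"
  shows "(\<Sum>m=1..p. phiext p \<phi> (m+i) T * y (T - int i - int m))
       + (\<Sum>j=1..i. phiext p \<phi> (i-j+1) T * y (T - int i - 1 + int j))
       = (\<Sum>l=1..p. \<phi> l T * y (T - int l))"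
proof -
  let ?f = "\<lambda>l. phiext p \<phi> l T * y (T - int l)"
  have A: "(\<Sum>m=1..p. phiext p \<phi> (m+i) T * y (T - int i - int m)) = sum ?f {1+i..p+i}"
    by (subst sum.shift_bounds_cl_nat_ivl) (simp add: algebra_simps)
  have B: "(\<Sum>j=1..i. phiext p \<phi> (i-j+1) T * y (T - int i - 1 + int j)) = sum ?f {1..i}"
    by (rule sum.reindex_bij_witness[of _ "\<lambda>l. i+1-l" "\<lambda>j. i+1-j"]) (auto simp: Suc_diff_le algebra_simps)
  have C: "sum ?f {1..i} + sum ?f {1+i..p+i} = sum ?f {1..i+p}"
    using sum.ub_add_nat[of 1 i ?f p] by (simp add: add.commute)
  have D: "sum ?f {1..i+p} = sum ?f {1..p} + sum ?f {p+1..p+i}"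
    using sum.ub_add_nat[of 1 p ?f i] by (simp add: add.commute)
  have E: "sum ?f {p+1..p+i} = 0" by (rule sum.neutral) (auto simp: phiext_def)
  have F: "sum ?f {1..p} = (\<Sum>l=1..p. \<phi> l T * y (T - int l))"
    by (rule sum.cong) (auto simp: phiext_def)
  show ?thesis using A B C D E F by (simp add: add.commute)
qed

lemma detmain:
  fixes \<phi> :: "nat \<Rightarrow> int \<Rightarrow> complex" and y :: "int \<Rightarrow> complex"
  assumes rec: "\<And>t. t \<ge> s + 1 \<Longrightarrow> y t = (\<Sum>l = 1..p. \<phi> l t * y (t - int l))"
    and n: "n \<ge> 1" and t: "t = s + int n"
  shows "y t = (\<Sum>m=1..p. det (PhiMat p \<phi> m t s) * y (s - int m + 1))"
proof -
  have nt: "nat (t - s) = n" using t by simp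
  define C where "C i = (\<Sum>m=1..p. y (s - int m + 1) * phiext p \<phi> (m+i) (s + int i + 1))" for i
  define P where "P m = PhiMat p \<phi> m t s" for m
  define B where "B = mat n n (\<lambda>(i,j). if j = 0 then C i else P 1 $$ (i,j))"
  have Pc: "P m \<in> carrier_mat n n" for m unfolding P_def PhiMat_def nt by simp
  have Bc: "B \<in> carrier_mat n n" unfolding B_def by simp
  have Pij: "P m $$ (i,j) = (if j = 0 then phiext p \<phi> (m + i) (s + int i + 1)
     else if j = i + 1 then -1
     else if j \<le> i then phiext p \<phi> (i - j + 1) (s + int i + 1)
     else 0)" if "i < n" "j < n" for m i j
    using that unfolding P_def PhiMat_def nt by simp
  have del: "mat_delete B i 0 = mat_delete (P m) i 0" if "i < n" for i m
    unfolding mat_delete_def using Bc Pc[of m] Pc[of 1]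
    by (intro eq_matI) (auto simp: B_def Pij)
  have step1: "det B = (\<Sum>m=1..p. det (P m) * y (s - int m + 1))"
  proof -
    have "det B = (\<Sum>i<n. B $$ (i,0) * cofactor B i 0)"
      using laplace_expansion_column[OF Bc, of 0] n by simp
    also have "\<dots> = (\<Sum>i<n. \<Sum>m=1..p. y (s - int m + 1) * (P m $$ (i,0) * cofactor (P m) i 0))"
    proof (rule sum.cong)
      fix i assume "i \<in> {..<n}"
      hence i: "i < n" by simp
      have b0: "B $$ (i,0) = C i" using i n by (simp add: B_def)
      have cf: "cofactor B i 0 = cofactor (P m) i 0" for m unfolding cofactor_def using del[OF i] by simp
      show "B $$ (i,0) * cofactor B i 0 = (\<Sum>m=1..p. y (s - int m + 1) * (P m $$ (i,0) * cofactor (P m) i 0))"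
        unfolding b0 C_def sum_distrib_right using i n by (intro sum.cong) (auto simp: Pij cf)
    qed simp
    also have "\<dots> = (\<Sum>m=1..p. y (s - int m + 1) * (\<Sum>i<n. P m $$ (i,0) * cofactor (P m) i 0))"
      by (subst sum.swap) (simp add: sum_distrib_left)
    also have "\<dots> = (\<Sum>m=1..p. det (P m) * y (s - int m + 1))"
      using laplace_expansion_column[OF Pc, of 0] n by (simp add: ac_simps)
    finally show ?thesis .
  qed
  define v where "v = vec n (\<lambda>j. if j = 0 then 1 else y (s + int j))"
  have vc: "v \<in> carrier_vec n" unfolding v_def by simp
  define w where "w = vec n (\<lambda>i. if i = n - 1 then y t else 0)"
  have Bv: "B *\<^sub>v v = w"
  proof (rule eq_vecI)
    show "dim_vec (B *\<^sub>v v) = dim_vec w" using Bc by (simp add: w_def)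
    fix i assume "i < dim_vec w"
    hence i: "i < n" by (simp add: w_def)
    have "(B *\<^sub>v v) $ i = (\<Sum>j\<in>{0..<n}. B $$ (i,j) * v $ j)"
      using i Bc vc by (simp add: scalar_prod_def)
    also have "\<dots> = B $$ (i,0) * v $ 0 + (\<Sum>j\<in>{1..<n}. B $$ (i,j) * v $ j)"
      using n by (subst sum.atLeast_Suc_lessThan) auto
    also have "(\<Sum>j\<in>{1..<n}. B $$ (i,j) * v $ j) = (\<Sum>j\<in>{1..<n}.
        (if j \<le> i then phiext p \<phi> (i - j + 1) (s + int i + 1) * y (s + int j) else 0)
        + (if j = i + 1 then - y (s + int i + 1) else 0))"
      by (rule sum.cong) (use i in \<open>auto simp: B_def v_def Pij ac_simps\<close>)
    also have "\<dots> = (\<Sum>j\<in>{1..i}. phiext p \<phi> (i - j + 1) (s + int i + 1) * y (s + int j))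
        + (if i + 1 < n then - y (s + int i + 1) else 0)"
    proof -
      have "{j\<in>{1..<n}. j \<le> i} = {1..i}" using i by auto
      hence "(\<Sum>j\<in>{1..<n}. (if j \<le> i then phiext p \<phi> (i - j + 1) (s + int i + 1) * y (s + int j) else 0))
        = (\<Sum>j\<in>{1..i}. phiext p \<phi> (i - j + 1) (s + int i + 1) * y (s + int j))"
        using sum.inter_filter[of "{1..<n}" "\<lambda>j. phiext p \<phi> (i - j + 1) (s + int i + 1) * y (s + int j)" "\<lambda>j. j \<le> i"]
        by simp
      moreover have "(\<Sum>j\<in>{1..<n}. (if j = i + 1 then - y (s + int i + 1) else 0))
         = (if i + 1 < n then - y (s + int i + 1) else 0)"
        by (subst sum.delta) auto
      ultimately show ?thesis by (simp add: sum.distrib)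
    qed
    finally have e: "(B *\<^sub>v v) $ i = C i + (\<Sum>j\<in>{1..i}. phiext p \<phi> (i - j + 1) (s + int i + 1) * y (s + int j))
        + (if i + 1 < n then - y (s + int i + 1) else 0)"
      using i n by (simp add: B_def v_def)
    have "C i + (\<Sum>j\<in>{1..i}. phiext p \<phi> (i - j + 1) (s + int i + 1) * y (s + int j))
         = (\<Sum>l=1..p. \<phi> l (s + int i + 1) * y ((s + int i + 1) - int l))"
      using sumS[of p \<phi> i "s + int i + 1" y] unfolding C_def by (simp add: algebra_simps)
    also have "\<dots> = y (s + int i + 1)" using rec[of "s + int i + 1"] by simp
    finally have "C i + (\<Sum>j\<in>{1..i}. phiext p \<phi> (i - j + 1) (s + int i + 1) * y (s + int j)) = y (s + int i + 1)" .
    with e i show "(B *\<^sub>v v) $ i = w $ i" using t by (auto simp: w_def)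
  qed
  have step2: "det (replace_col B w 0) = det B"
    using cramer_lemma_mat[OF Bc vc, of 0] n Bv by (simp add: v_def)
  have step3: "det (replace_col B w 0) = y t"
  proof -
    define R where "R = replace_col B w 0"
    have Rc: "R \<in> carrier_mat n n" using Bc by (simp add: R_def replace_col_def)
    define D where "D = mat_delete R (n-1) 0"
    have Dc: "D \<in> carrier_mat (n-1) (n-1)" using Rc by (simp add: D_def mat_delete_def)
    have Dij: "D $$ (i,j) = P 1 $$ (i, Suc j)" if "i < n - 1" "j < n - 1" for i j
      using that Rc Bc unfolding D_def mat_delete_def by (simp add: R_def replace_col_def B_def)
    have "det D = prod_list (diag_mat D)"
      by (rule det_lower_triangular[OF _ Dc]) (use Dc in \<open>auto simp: Dij Pij\<close>)
    also have "\<dots> = (\<Prod>i = 0 ..< n-1. D $$ (i,i))" using Dc by (simp add: prod_list_diag_prod)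
    also have "\<dots> = (\<Prod>i = 0 ..< n-1. -1)" by (rule prod.cong) (auto simp: Dij Pij)
    finally have dD: "det D = (-1)^(n-1)" by simp
    have "det R = (\<Sum>i<n. R $$ (i,0) * cofactor R i 0)"
      using laplace_expansion_column[OF Rc, of 0] n by simp
    also have "\<dots> = (\<Sum>i<n. if i = n - 1 then y t * cofactor R i 0 else 0)"
      by (rule sum.cong) (use Bc in \<open>auto simp: R_def replace_col_def w_def\<close>)
    also have "\<dots> = y t * cofactor R (n-1) 0" using n by (subst sum.delta) auto
    also have "\<dots> = y t" unfolding cofactor_def D_def[symmetric] dD
      by (simp flip: power_add)
    finally show ?thesis unfolding R_def .
  qed
  show ?thesis using step1 step2 step3 unfolding P_def by simp
qed

theorem proposition3:
  fixes p :: nat and \<phi> :: "nat \<Rightarrow> int \<Rightarrow> complex" and s :: int and y :: "int \<Rightarrow> complex"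
  assumes "p \<ge> 1"
    and rec: "\<And>t. t \<ge> s + 1 \<Longrightarrow> y t = (\<Sum>l = 1..p. \<phi> l t * y (t - int l))"
  shows "\<forall>t \<ge> s - int p + 1. y t = (\<Sum>m = 1..p. xi p \<phi> m t s * y (s - int m + 1))"
proof (intro allI impI)
  fix t assume tge: "t \<ge> s - int p + 1"
  show "y t = (\<Sum>m = 1..p. xi p \<phi> m t s * y (s - int m + 1))"
  proof (cases "t > s")
    case True
    have "y t = (\<Sum>m=1..p. det (PhiMat p \<phi> m t s) * y (s - int m + 1))"
      using detmain[OF rec, where n="nat (t - s)" and t=t] True by simp
    then show ?thesis using True by (simp add: xi_def)
  next
    case False
    define m0 where "m0 = nat (s - t + 1)"
    have m0: "m0 \<in> {1..p}" "t = s - int m0 + 1" using False tge by (auto simp: m0_def)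
    have "(\<Sum>m = 1..p. xi p \<phi> m t s * y (s - int m + 1))
        = (\<Sum>m = 1..p. if m = m0 then y (s - int m + 1) else 0)"
      by (rule sum.cong) (use False m0 in \<open>auto simp: xi_def\<close>)
    also have "\<dots> = y t" using m0 by (simp add: sum.delta)
    finally show ?thesis by simp
  qed
qed
end
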